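(* Let $G$ be a non-trivial Polish group such that for every infinite $S\subseteq\mathbb N$ the set $\mathbb A(S)=\{g\in G: \exists s\in S\ g^s=1\}$ is dense in $G$. Then every topological similarity class of $G$ is meagre. Moreover, for every infinite $S\subseteq\mathbb N$ the set $$\mathbb C(S)=\{g\in G:\ \text{there is a sequence } (s_n)\subseteq S \text{ with } g^{s_n}\to 1\}$$ is a dense $G_\delta$ subset of $G$ that is invariant under topological similarity.
   Context: Two elements $f,g$ of a Polish group $G$ are topologically similar if the cyclic subgroups $\langle f\rangle$ and $\langle g\rangle$, with the subspace topologies from $G$, are isomorphic as topological groups. A topological similarity class is an equivalence class of this relation. *)

theory Defs
  imports "HOL-Analysis.Analysis" "HOL-Algebra.Generated_Groups"
begin

definition Polish_top :: "'a topology \<Rightarrow> bool" where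
  "Polish_top Y \<longleftrightarrow> completely_metrizable_space Y \<and> separable_space Y"

definition nowhere_dense_in :: "'a topology \<Rightarrow> 'a set \<Rightarrow> bool" where
  "nowhere_dense_in X S \<longleftrightarrow> S \<subseteq> topspace X \<and> X interior_of (X closure_of S) = {}"

definition meagre_in :: "'a topology \<Rightarrow> 'a set \<Rightarrow> bool" where
  "meagre_in X S \<longleftrightarrow> S \<subseteq> topspace X \<and>
     (\<exists>N :: nat \<Rightarrow> 'a set. (\<forall>n. nowhere_dense_in X (N n)) \<and> S \<subseteq> \<Union> (range N))"

definition Polish_group :: "('a, 'b) monoid_scheme \<Rightarrow> 'a topology \<Rightarrow> bool" where
  "Polish_group G T \<longleftrightarrow> group G \<and> topspace T = carrier G \<and> Polish_top T \<and>
     continuous_map (prod_topology T T) T (\<lambda>(x, y). x \<otimes>\<^bsub>G\<^esub> y) \<and>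
     continuous_map T T (\<lambda>x. inv\<^bsub>G\<^esub> x)"

definition top_similar :: "('a, 'b) monoid_scheme \<Rightarrow> 'a topology \<Rightarrow> 'a \<Rightarrow> 'a \<Rightarrow> bool" where
  "top_similar G T f g \<longleftrightarrow>
     (\<exists>\<phi>. \<phi> \<in> iso (G\<lparr>carrier := generate G {f}\<rparr>) (G\<lparr>carrier := generate G {g}\<rparr>) \<and>
          homeomorphic_map (subtopology T (generate G {f})) (subtopology T (generate G {g})) \<phi>)"

definition top_similarity_class :: "('a, 'b) monoid_scheme \<Rightarrow> 'a topology \<Rightarrow> 'a \<Rightarrow> 'a set" where
  "top_similarity_class G T f = {g \<in> carrier G. top_similar G T f g}"

definition setA :: "('a, 'b) monoid_scheme \<Rightarrow> nat set \<Rightarrow> 'a set" where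
  "setA G S = {g \<in> carrier G. \<exists>s\<in>S. g [^]\<^bsub>G\<^esub> s = \<one>\<^bsub>G\<^esub>}"

definition setC :: "('a, 'b) monoid_scheme \<Rightarrow> 'a topology \<Rightarrow> nat set \<Rightarrow> 'a set" where
  "setC G T S = {g \<in> carrier G. \<exists>s :: nat \<Rightarrow> nat. range s \<subseteq> S \<and>
       limitin T (\<lambda>n. g [^]\<^bsub>G\<^esub> s n) \<one>\<^bsub>G\<^esub> sequentially}"

end

theory Submission
  imports Defs "HOL-Algebra.Multiplicative_Group"
begin
lemma PG_group: "Polish_group G T \<Longrightarrow> group G"
  by (simp add: Polish_group_def)

lemma PG_top: "Polish_group G T \<Longrightarrow> topspace T = carrier G"
  by (simp add: Polish_group_def)

lemma PG_mult: "Polish_group G T \<Longrightarrow> continuous_map (prod_topology T T) T (\<lambda>(x, y). x \<otimes>\<^bsub>G\<^esub> y)"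
  by (simp add: Polish_group_def)

lemma PG_inv: "Polish_group G T \<Longrightarrow> continuous_map T T (\<lambda>x. inv\<^bsub>G\<^esub> x)"
  by (simp add: Polish_group_def)

lemma PG_metric: assumes "Polish_group G T"
  obtains M d where "Metric_space M d" "T = Metric_space.mtopology M d"
  using assms unfolding Polish_group_def Polish_top_def completely_metrizable_space_def by blast

lemma PG_Hausdorff: assumes "Polish_group G T" shows "Hausdorff_space T"
  using PG_metric[OF assms] Metric_space.Hausdorff_space_mtopology by metis

lemma PG_mult2:
  assumes "Polish_group G T" "continuous_map X T f" "continuous_map X T g"
  shows "continuous_map X T (\<lambda>x. f x \<otimes>\<^bsub>G\<^esub> g x)"
proof -
  have "continuous_map X T ((\<lambda>(x, y). x \<otimes>\<^bsub>G\<^esub> y) \<circ> (\<lambda>x. (f x, g x)))"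
    by (rule continuous_map_compose[OF continuous_map_pairedI[OF assms(2,3)] PG_mult[OF assms(1)]])
  then show ?thesis by (simp add: o_def)
qed

lemma PG_pow:
  assumes "Polish_group G T"
  shows "continuous_map T T (\<lambda>x. x [^]\<^bsub>G\<^esub> (n::nat))"
proof (induction n)
  case 0
  have "\<one>\<^bsub>G\<^esub> \<in> topspace T" using PG_top[OF assms] group.is_monoid[OF PG_group[OF assms]]
    by (simp add: monoid.one_closed)
  then show ?case by simp
next
  case (Suc n)
  have "continuous_map T T (\<lambda>x. x [^]\<^bsub>G\<^esub> n \<otimes>\<^bsub>G\<^esub> x)"
    by (rule PG_mult2[OF assms Suc continuous_map_id[unfolded id_def]])
  then show ?case by simp
qed

lemma PG_ipow:
  assumes "Polish_group G T"
  shows "continuous_map T T (\<lambda>x. x [^]\<^bsub>G\<^esub> (k::int))"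
proof (cases "k < 0")
  case True
  have e: "(\<lambda>x. x [^]\<^bsub>G\<^esub> k) = (\<lambda>x. inv\<^bsub>G\<^esub> x) \<circ> (\<lambda>x. x [^]\<^bsub>G\<^esub> nat (-k))"
    by (rule ext) (simp only: int_pow_def2 if_P[OF True] o_apply)
  show ?thesis unfolding e
    by (rule continuous_map_compose[OF PG_pow[OF assms] PG_inv[OF assms]])
next
  case False
  have e: "(\<lambda>x. x [^]\<^bsub>G\<^esub> k) = (\<lambda>x. x [^]\<^bsub>G\<^esub> nat k)"
    by (rule ext) (simp only: int_pow_def2 if_not_P[OF False])
  show ?thesis unfolding e by (rule PG_pow[OF assms])
qed

lemma setA_sub_setC:
  assumes "Polish_group G T" shows "setA G S \<subseteq> setC G T S"
proof
  fix g assume "g \<in> setA G S"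
  then obtain s where g: "g \<in> carrier G" "s \<in> S" "g [^]\<^bsub>G\<^esub> s = \<one>\<^bsub>G\<^esub>"
    unfolding setA_def by blast
  have one: "\<one>\<^bsub>G\<^esub> \<in> topspace T" using PG_top[OF assms] group.is_monoid[OF PG_group[OF assms]]
    by (simp add: monoid.one_closed)
  show "g \<in> setC G T S" unfolding setC_def
    using g one by (intro CollectI conjI exI[of _ "\<lambda>n. s"]) auto
qed

lemma setC_repr:
  assumes PG: "Polish_group G T"
  obtains Op :: "nat \<Rightarrow> 'a set" where "\<And>k. openin T (Op k)" "setC G T S = \<Inter>(range Op)"
proof -
  obtain M d where md: "Metric_space M d" "T = Metric_space.mtopology M d"
    using PG_metric[OF PG] by blast
  interpret Metric_space M d by (rule md(1))
  have grp: "group G" by (rule PG_group[OF PG])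
  have top: "M = carrier G" using PG_top[OF PG] md(2) by simp
  have one: "\<one>\<^bsub>G\<^esub> \<in> M" using top group.is_monoid[OF grp] by (simp add: monoid.one_closed)
  define Op where "Op k = (\<Union>s\<in>S. {g \<in> topspace T. g [^]\<^bsub>G\<^esub> s \<in> mball \<one>\<^bsub>G\<^esub> (1 / Suc k)})" for k
  have op1: "openin T {g \<in> topspace T. g [^]\<^bsub>G\<^esub> s \<in> mball \<one>\<^bsub>G\<^esub> (1 / Suc k)}" for s :: nat and k :: nat
    by (rule openin_continuous_map_preimage[OF PG_pow[OF PG]]) (unfold md(2), rule openin_mball)
  have o1: "openin T (Op k)" for k
    unfolding Op_def by (intro openin_Union) (use op1 in blast)
  have eq: "setC G T S = \<Inter>(range Op)"
  proof (intro equalityI subsetI)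
    fix g assume "g \<in> setC G T S"
    then obtain s where g: "g \<in> carrier G" "range s \<subseteq> S" "limitin T (\<lambda>n. g [^]\<^bsub>G\<^esub> s n) \<one>\<^bsub>G\<^esub> sequentially"
      unfolding setC_def by blast
    show "g \<in> \<Inter>(range Op)"
    proof
      fix k
      have "eventually (\<lambda>n. g [^]\<^bsub>G\<^esub> s n \<in> M \<and> d (g [^]\<^bsub>G\<^esub> s n) \<one>\<^bsub>G\<^esub> < 1 / Suc k) sequentially"
        using g(3) unfolding md(2) limitin_metric by simp
      then obtain n where n: "g [^]\<^bsub>G\<^esub> s n \<in> M" "d (g [^]\<^bsub>G\<^esub> s n) \<one>\<^bsub>G\<^esub> < 1 / Suc k"
        unfolding eventually_sequentially by blast
      have "g [^]\<^bsub>G\<^esub> s n \<in> mball \<one>\<^bsub>G\<^esub> (1 / Suc k)"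
        using n one by (simp add: mball_def commute)
      moreover have "s n \<in> S" using g(2) by auto
      ultimately show "g \<in> Op k" unfolding Op_def using g(1) PG_top[OF PG] by blast
    qed
  next
    fix g assume g: "g \<in> \<Inter>(range Op)"
    then have gc: "g \<in> carrier G" unfolding Op_def using PG_top[OF PG] by blast
    have "\<forall>k. \<exists>s\<in>S. g [^]\<^bsub>G\<^esub> s \<in> mball \<one>\<^bsub>G\<^esub> (1 / Suc k)"
      using g unfolding Op_def by blast
    then obtain sf where sf: "\<And>k. sf k \<in> S" "\<And>k. g [^]\<^bsub>G\<^esub> sf k \<in> mball \<one>\<^bsub>G\<^esub> (1 / Suc k)"
      by metis
    have "limitin T (\<lambda>n. g [^]\<^bsub>G\<^esub> sf n) \<one>\<^bsub>G\<^esub> sequentially"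
      unfolding md(2) limitin_metric
    proof (intro conjI allI impI one)
      fix e :: real assume e: "e > 0"
      obtain N :: nat where N: "1 / Suc N < e"
        using e by (metis nat_approx_posE)
      show "eventually (\<lambda>n. g [^]\<^bsub>G\<^esub> sf n \<in> M \<and> d (g [^]\<^bsub>G\<^esub> sf n) \<one>\<^bsub>G\<^esub> < e) sequentially"
        unfolding eventually_sequentially
      proof (intro exI[of _ N] allI impI)
        fix n assume "N \<le> n"
        then have "1 / real (Suc n) \<le> 1 / Suc N" by (simp add: frac_le)
        then show "g [^]\<^bsub>G\<^esub> sf n \<in> M \<and> d (g [^]\<^bsub>G\<^esub> sf n) \<one>\<^bsub>G\<^esub> < e"
          using sf(2)[of n] N by (auto simp: mball_def commute)
      qed
    qed
    then show "g \<in> setC G T S" unfolding setC_def using gc sf(1) by blast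
  qed
  show ?thesis by (rule that[of Op, OF o1 eq])
qed


lemma setC_props:
  assumes PG: "Polish_group G T"
    and dA: "T closure_of (setA G S) = topspace T"
  shows "T closure_of (setC G T S) = topspace T" "gdelta_in T (setC G T S)"
    "meagre_in T (topspace T - setC G T S)"
proof -
  obtain Op :: "nat \<Rightarrow> 'a set" where op: "\<And>k. openin T (Op k)" "setC G T S = \<Inter>(range Op)"
    using setC_repr[OF PG] by blast
  have sub: "setC G T S \<subseteq> topspace T" unfolding setC_def using PG_top[OF PG] by blast
  show dC: "T closure_of (setC G T S) = topspace T"
    using closure_of_mono[OF setA_sub_setC[OF PG], of T S] closure_of_subset_topspace[of T "setC G T S"] dA
    by blast
  show "gdelta_in T (setC G T S)"
    unfolding gdelta_in_alt intersection_of_def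
    using sub op by (intro conjI exI[of _ "range Op"]) auto
  have nd: "nowhere_dense_in T (topspace T - Op k)" for k
  proof -
    have cl: "T closure_of (topspace T - Op k) = topspace T - Op k"
      using op(1) by (simp add: closure_of_closedin closedin_diff)
    have "topspace T \<subseteq> T closure_of (Op k)"
      using closure_of_mono[of "setC G T S" "Op k" T] dC op(2) by blast
    then show ?thesis unfolding nowhere_dense_in_def cl interior_of_complement by blast
  qed
  show "meagre_in T (topspace T - setC G T S)"
    unfolding meagre_in_def using nd op(2) by (intro conjI exI[of _ "\<lambda>k. topspace T - Op k"]) auto
qed


lemma gen_sub:
  assumes "group G" "f \<in> carrier G"
  shows "subgroup (generate G {f}) G" "group (G\<lparr>carrier := generate G {f}\<rparr>)"
    "generate G {f} \<subseteq> carrier G"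
proof -
  show s: "subgroup (generate G {f}) G"
    using assms by (intro group.generate_is_subgroup) auto
  show "group (G\<lparr>carrier := generate G {f}\<rparr>)" by (rule group.subgroup_imp_group[OF assms(1) s])
  show "generate G {f} \<subseteq> carrier G" using s by (rule subgroup.subset)
qed

lemma top_similar_sym:
  assumes PG: "Polish_group G T" and fg: "f \<in> carrier G" "g \<in> carrier G"
    and sim: "top_similar G T f g"
  shows "top_similar G T g f"
proof -
  have grp: "group G" by (rule PG_group[OF PG])
  define Hf where "Hf = generate G {f}"
  define Hg where "Hg = generate G {g}"
  note sf = gen_sub[OF grp fg(1), folded Hf_def]
  note sg = gen_sub[OF grp fg(2), folded Hg_def]
  obtain \<phi> where iso: "\<phi> \<in> iso (G\<lparr>carrier := Hf\<rparr>) (G\<lparr>carrier := Hg\<rparr>)"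
    and hm: "homeomorphic_map (subtopology T Hf) (subtopology T Hg) \<phi>"
    using sim unfolding top_similar_def Hf_def Hg_def by blast
  have tf: "topspace (subtopology T Hf) = Hf" using sf(3) PG_top[OF PG] by auto
  have tg: "topspace (subtopology T Hg) = Hg" using sg(3) PG_top[OF PG] by auto
  obtain \<psi> where hms: "homeomorphic_maps (subtopology T Hf) (subtopology T Hg) \<phi> \<psi>"
    using hm homeomorphic_map_maps by blast
  then have hm2: "homeomorphic_map (subtopology T Hg) (subtopology T Hf) \<psi>"
    and inv1: "\<And>x. x \<in> Hf \<Longrightarrow> \<psi> (\<phi> x) = x" and inv2: "\<And>y. y \<in> Hg \<Longrightarrow> \<phi> (\<psi> y) = y"
    unfolding homeomorphic_maps_map tf tg by auto
  have psiH: "\<psi> y \<in> Hf" if "y \<in> Hg" for y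
    using homeomorphic_imp_surjective_map[OF hm2] that tf tg by blast
  have inj: "inj_on \<phi> Hf" using iso unfolding iso_def bij_betw_def by simp
  have i1: "inv_into Hf \<phi> \<in> iso (G\<lparr>carrier := Hg\<rparr>) (G\<lparr>carrier := Hf\<rparr>)"
    using group.iso_set_sym[OF sf(2) iso] by simp
  have "\<psi> \<in> iso (G\<lparr>carrier := Hg\<rparr>) (G\<lparr>carrier := Hf\<rparr>)"
  proof (rule group.iso_eq[OF sg(2) i1])
    fix y assume "y \<in> carrier (G\<lparr>carrier := Hg\<rparr>)"
    then have y: "y \<in> Hg" by simp
    show "\<psi> y = inv_into Hf \<phi> y"
      using inv_into_f_eq[OF inj psiH[OF y] inv2[OF y]] by simp
  qed
  then show ?thesis unfolding top_similar_def Hf_def[symmetric] Hg_def[symmetric]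
    using hm2 by blast
qed


lemma setC_invariant:
  assumes PG: "Polish_group G T" and f: "f \<in> setC G T S" and g: "g \<in> carrier G"
    and sim: "top_similar G T f g"
  shows "g \<in> setC G T S"
proof -
  have grp: "group G" by (rule PG_group[OF PG])
  have mon: "monoid G" using grp by (rule group.is_monoid)
  obtain s where fc: "f \<in> carrier G" and s: "range s \<subseteq> S"
    and lim: "limitin T (\<lambda>n. f [^]\<^bsub>G\<^esub> s n) \<one>\<^bsub>G\<^esub> sequentially"
    using f unfolding setC_def by blast
  define Hf where "Hf = generate G {f}"
  define Hg where "Hg = generate G {g}"
  note sf = gen_sub[OF grp fc, folded Hf_def]
  note sg = gen_sub[OF grp g, folded Hg_def]
  obtain \<phi> where iso: "\<phi> \<in> iso (G\<lparr>carrier := Hf\<rparr>) (G\<lparr>carrier := Hg\<rparr>)"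
    and hm: "homeomorphic_map (subtopology T Hf) (subtopology T Hg) \<phi>"
    using sim unfolding top_similar_def Hf_def Hg_def by blast
  have hom: "\<phi> \<in> hom (G\<lparr>carrier := Hf\<rparr>) (G\<lparr>carrier := Hg\<rparr>)"
    and bij: "bij_betw \<phi> Hf Hg" using iso unfolding iso_def by auto
  have "g \<in> Hg" unfolding Hg_def by (rule generate.incl) simp
  then obtain h where h: "h \<in> Hf" "\<phi> h = g" using bij unfolding bij_betw_def by blast
  obtain k :: int where hk: "h = f [^]\<^bsub>G\<^esub> k"
    using h(1) unfolding Hf_def group.generate_pow[OF grp fc] by blast
  define y where "y n = (f [^]\<^bsub>G\<^esub> s n) [^]\<^bsub>G\<^esub> k" for n
  have yeq: "y n = f [^]\<^bsub>G\<^esub> (int (s n) * k)" for n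
  proof -
    have "y n = (f [^]\<^bsub>G\<^esub> int (s n)) [^]\<^bsub>G\<^esub> k" by (simp add: y_def int_pow_int)
    also have "\<dots> = f [^]\<^bsub>G\<^esub> (int (s n) * k)" by (rule group.int_pow_pow[OF grp fc])
    finally show ?thesis .
  qed
  have yh: "y n = h [^]\<^bsub>G\<^esub> s n" for n
  proof -
    have "y n = f [^]\<^bsub>G\<^esub> (k * int (s n))" by (simp add: yeq mult.commute)
    also have "\<dots> = (f [^]\<^bsub>G\<^esub> k) [^]\<^bsub>G\<^esub> int (s n)" by (rule group.int_pow_pow[OF grp fc, symmetric])
    also have "\<dots> = h [^]\<^bsub>G\<^esub> s n" by (simp add: hk int_pow_int)
    finally show ?thesis .
  qed
  have yH: "y n \<in> Hf" for n
    unfolding yeq Hf_def group.generate_pow[OF grp fc] by blast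
  have one: "\<one>\<^bsub>G\<^esub> \<in> Hf" unfolding Hf_def by (rule generate.one)
  have "limitin T ((\<lambda>x. x [^]\<^bsub>G\<^esub> k) \<circ> (\<lambda>n. f [^]\<^bsub>G\<^esub> s n)) (\<one>\<^bsub>G\<^esub> [^]\<^bsub>G\<^esub> k) sequentially"
    by (rule continuous_map_limit[OF PG_ipow[OF PG] lim])
  then have limT: "limitin T y \<one>\<^bsub>G\<^esub> sequentially"
    by (simp add: y_def[abs_def] o_def group.int_pow_one[OF grp])
  have limHf: "limitin (subtopology T Hf) y \<one>\<^bsub>G\<^esub> sequentially"
    using limT yH one by (simp add: limitin_subtopology)
  have limHg: "limitin (subtopology T Hg) (\<phi> \<circ> y) (\<phi> \<one>\<^bsub>G\<^esub>) sequentially"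
    by (rule continuous_map_limit[OF homeomorphic_imp_continuous_map[OF hm] limHf])
  have "\<phi> (\<one>\<^bsub>G\<lparr>carrier := Hf\<rparr>\<^esub>) = \<one>\<^bsub>G\<lparr>carrier := Hg\<rparr>\<^esub>"
    by (rule hom_one[OF hom sf(2) sg(2)])
  then have p1: "\<phi> \<one>\<^bsub>G\<^esub> = \<one>\<^bsub>G\<^esub>" by simp
  have py: "\<phi> (y n) = g [^]\<^bsub>G\<^esub> s n" for n
  proof -
    have "\<phi> (y n) = \<phi> (h [^]\<^bsub>G\<lparr>carrier := Hf\<rparr>\<^esub> s n)"
      by (simp only: yh monoid.nat_pow_consistent[OF mon, of h "s n" Hf])
    also have "\<dots> = \<phi> h [^]\<^bsub>G\<lparr>carrier := Hg\<rparr>\<^esub> s n"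
      by (rule hom_nat_pow[OF hom _ sf(2) sg(2)]) (simp add: h(1))
    also have "\<dots> = g [^]\<^bsub>G\<^esub> s n"
      by (simp only: h(2) monoid.nat_pow_consistent[OF mon, of g "s n" Hg])
    finally show ?thesis .
  qed
  have "limitin T (\<lambda>n. g [^]\<^bsub>G\<^esub> s n) \<one>\<^bsub>G\<^esub> sequentially"
    using limHg unfolding p1 limitin_subtopology by (simp add: o_def py)
  then show ?thesis unfolding setC_def using g s by blast
qed


lemma f_is_one:
  assumes PG: "Polish_group G T" and fc: "f \<in> carrier G"
    and allC: "\<And>S. infinite S \<Longrightarrow> 0 \<notin> S \<Longrightarrow> f \<in> setC G T S"
  shows "f = \<one>\<^bsub>G\<^esub>"
proof -
  have grp: "group G" by (rule PG_group[OF PG])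
  have mon: "monoid G" using grp by (rule group.is_monoid)
  have one: "\<one>\<^bsub>G\<^esub> \<in> topspace T" using PG_top[OF PG] mon by (simp add: monoid.one_closed)
  have lim: "limitin T (\<lambda>n. f [^]\<^bsub>G\<^esub> (n::nat)) \<one>\<^bsub>G\<^esub> sequentially"
    unfolding limitin_sequentially
  proof (intro conjI one allI impI)
    fix U assume U: "openin T U \<and> \<one>\<^bsub>G\<^esub> \<in> U"
    define S where "S = {s::nat. 0 < s \<and> f [^]\<^bsub>G\<^esub> s \<notin> U}"
    show "\<exists>N. \<forall>n\<ge>N. f [^]\<^bsub>G\<^esub> (n::nat) \<in> U"
    proof (cases "finite S")
      case True
      then obtain k where k: "S \<subseteq> {..<k}" using finite_nat_bounded by blast
      show ?thesis
      proof (intro exI[of _ "Suc k"] allI impI)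
        fix n :: nat assume n: "Suc k \<le> n"
        then have "n \<notin> S" using k by auto
        then show "f [^]\<^bsub>G\<^esub> n \<in> U" using n unfolding S_def by simp
      qed
    next
      case False
      have "0 \<notin> S" unfolding S_def by simp
      then have "f \<in> setC G T S" using allC False by blast
      then obtain s where s: "range s \<subseteq> S" "limitin T (\<lambda>n. f [^]\<^bsub>G\<^esub> s n) \<one>\<^bsub>G\<^esub> sequentially"
        unfolding setC_def by blast
      then obtain N where "\<forall>n\<ge>N. f [^]\<^bsub>G\<^esub> s n \<in> U"
        using U unfolding limitin_sequentially by blast
      moreover have "s N \<in> S" using s(1) by blast
      ultimately show ?thesis unfolding S_def by auto
    qed
  qed
  have lim1: "limitin T (\<lambda>n. f [^]\<^bsub>G\<^esub> (n + 1)) \<one>\<^bsub>G\<^esub> sequentially"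
    by (rule limitin_sequentially_offset[OF lim])
  have limP: "limitin (prod_topology T T) (\<lambda>n. (f [^]\<^bsub>G\<^esub> (n + 1), f [^]\<^bsub>G\<^esub> n)) (\<one>\<^bsub>G\<^esub>, \<one>\<^bsub>G\<^esub>) sequentially"
    unfolding limitin_pairwise using lim lim1 by (simp add: o_def)
  have cm: "continuous_map (prod_topology T T) T (\<lambda>p. fst p \<otimes>\<^bsub>G\<^esub> inv\<^bsub>G\<^esub> (snd p))"
    by (rule PG_mult2[OF PG continuous_map_fst continuous_map_compose[OF continuous_map_snd PG_inv[OF PG], unfolded o_def]])
  have "limitin T ((\<lambda>p. fst p \<otimes>\<^bsub>G\<^esub> inv\<^bsub>G\<^esub> (snd p)) \<circ> (\<lambda>n. (f [^]\<^bsub>G\<^esub> (n + 1), f [^]\<^bsub>G\<^esub> n)))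
      ((\<lambda>p. fst p \<otimes>\<^bsub>G\<^esub> inv\<^bsub>G\<^esub> (snd p)) (\<one>\<^bsub>G\<^esub>, \<one>\<^bsub>G\<^esub>)) sequentially"
    by (rule continuous_map_limit[OF cm limP])
  moreover have "f [^]\<^bsub>G\<^esub> (n + 1) \<otimes>\<^bsub>G\<^esub> inv\<^bsub>G\<^esub> (f [^]\<^bsub>G\<^esub> n) = f" for n :: nat
  proof -
    have "f [^]\<^bsub>G\<^esub> (n + 1) = f \<otimes>\<^bsub>G\<^esub> f [^]\<^bsub>G\<^esub> n" using monoid.nat_pow_Suc2[OF mon fc, of n] by (simp only: Suc_eq_plus1)
    moreover have pc: "f [^]\<^bsub>G\<^esub> n \<in> carrier G" using fc by (simp add: monoid.nat_pow_closed[OF mon])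
    ultimately show ?thesis using fc
      by (simp add: monoid.m_assoc[OF mon] group.r_inv[OF grp] monoid.r_one[OF mon] group.inv_closed[OF grp])
  qed
  ultimately have "limitin T (\<lambda>n. f) \<one>\<^bsub>G\<^esub> sequentially"
    using grp mon by (simp add: o_def monoid.inv_one[OF mon] monoid.one_closed[OF mon] monoid.l_one[OF mon])
  moreover have "limitin T (\<lambda>n. f) f sequentially" using fc PG_top[OF PG] by simp
  ultimately show ?thesis using limitin_Hausdorff_unique PG_Hausdorff[OF PG] by (metis trivial_limit_sequentially)
qed


lemma class_one:
  assumes PG: "Polish_group G T" and g: "g \<in> carrier G" and sim: "top_similar G T \<one>\<^bsub>G\<^esub> g"
  shows "g = \<one>\<^bsub>G\<^esub>"
proof -
  have grp: "group G" by (rule PG_group[OF PG])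
  obtain \<phi> where iso: "\<phi> \<in> iso (G\<lparr>carrier := generate G {\<one>\<^bsub>G\<^esub>}\<rparr>) (G\<lparr>carrier := generate G {g}\<rparr>)"
    using sim unfolding top_similar_def by blast
  then have "bij_betw \<phi> {\<one>\<^bsub>G\<^esub>} (generate G {g})"
    unfolding iso_def group.generate_one[OF grp] by simp
  then have e: "generate G {g} = {\<phi> \<one>\<^bsub>G\<^esub>}" unfolding bij_betw_def by simp
  have "g \<in> generate G {g}" by (rule generate.incl) simp
  moreover have "\<one>\<^bsub>G\<^esub> \<in> generate G {g}" by (rule generate.one)
  ultimately show ?thesis unfolding e by simp
qed

lemma one_not_open:
  assumes PG: "Polish_group G T" and nt: "carrier G \<noteq> {\<one>\<^bsub>G\<^esub>}"
    and dA: "\<And>S. infinite S \<Longrightarrow> 0 \<notin> S \<Longrightarrow> T closure_of (setA G S) = topspace T"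
  shows "\<not> openin T {\<one>\<^bsub>G\<^esub>}"
proof
  assume op: "openin T {\<one>\<^bsub>G\<^esub>}"
  have grp: "group G" by (rule PG_group[OF PG])
  have mon: "monoid G" using grp by (rule group.is_monoid)
  have top: "topspace T = carrier G" by (rule PG_top[OF PG])
  have sing: "openin T {x}" if x: "x \<in> carrier G" for x
  proof -
    have cm: "continuous_map T T (\<lambda>y. inv\<^bsub>G\<^esub> x \<otimes>\<^bsub>G\<^esub> y)"
      by (rule PG_mult2[OF PG _ continuous_map_id[unfolded id_def]])
         (simp add: top group.inv_closed[OF grp x])
    have "{y \<in> topspace T. inv\<^bsub>G\<^esub> x \<otimes>\<^bsub>G\<^esub> y \<in> {\<one>\<^bsub>G\<^esub>}} = {x}"
    proof (intro equalityI subsetI)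
      fix y assume "y \<in> {y \<in> topspace T. inv\<^bsub>G\<^esub> x \<otimes>\<^bsub>G\<^esub> y \<in> {\<one>\<^bsub>G\<^esub>}}"
      then have y: "y \<in> carrier G" "inv\<^bsub>G\<^esub> x \<otimes>\<^bsub>G\<^esub> y = \<one>\<^bsub>G\<^esub>" using top by auto
      then show "y \<in> {x}" using x
        by (metis group.inv_equality group.inv_inv group.inv_closed grp singletonI)
    next
      fix y assume "y \<in> {x}"
      then show "y \<in> {y \<in> topspace T. inv\<^bsub>G\<^esub> x \<otimes>\<^bsub>G\<^esub> y \<in> {\<one>\<^bsub>G\<^esub>}}"
        using x top by (simp add: group.l_inv[OF grp])
    qed
    then show ?thesis using openin_continuous_map_preimage[OF cm op] by simp
  qed
  have allopen: "openin T A" if "A \<subseteq> topspace T" for A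
  proof -
    have "A = \<Union>((\<lambda>x. {x}) ` A)" by blast
    moreover have "openin T (\<Union>((\<lambda>x. {x}) ` A))" using sing that top by (intro openin_Union) auto
    ultimately show ?thesis by simp
  qed
  have Aeq: "setA G S = carrier G" if "infinite S" "0 \<notin> S" for S
  proof -
    have sub: "setA G S \<subseteq> topspace T" unfolding setA_def top by blast
    have "closedin T (setA G S)"
      using allopen[of "topspace T - setA G S"] sub by (simp add: closedin_def)
    then show ?thesis using dA[OF that] closure_of_closedin top by metis
  qed
  obtain x where x: "x \<in> carrier G" "x \<noteq> \<one>\<^bsub>G\<^esub>"
    using nt monoid.one_closed[OF mon] by blast
  have inf1: "infinite {s::nat. 0 < s}"
    unfolding infinite_nat_iff_unbounded by (metis gr0I less_Suc_eq mem_Collect_eq not_less0)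
  have "x \<in> setA G {s::nat. 0 < s}" using Aeq[OF inf1] x by simp
  then obtain s :: nat where s: "0 < s" "x [^]\<^bsub>G\<^esub> s = \<one>\<^bsub>G\<^esub>" unfolding setA_def by blast
  define od where "od = group.ord G x"
  have odv: "od dvd s" using group.pow_eq_id[OF grp x(1)] s unfolding od_def by blast
  have o0: "od \<noteq> 0" using odv s by auto
  have o1: "od \<noteq> 1" using group.ord_eq_1[OF grp x(1)] x(2) unfolding od_def by blast
  define S2 where "S2 = {s::nat. \<not> od dvd s}"
  have "m * od + 1 \<in> S2" for m
  proof -
    have "\<not> od dvd m * od + 1"
    proof
      assume a: "od dvd m * od + 1"
      have "od dvd m * od" by simp
      then have "od dvd 1" using a dvd_add_right_iff by blast
      then show False using o1 by simp
    qed
    then show ?thesis unfolding S2_def by simp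
  qed
  moreover have "m < m * od + 1" for m using o0 by (metis Suc_eq_plus1 le_imp_less_Suc mult_le_mono2 mult.right_neutral not_less_eq_eq mult.commute less_one not_less)
  ultimately have inf2: "infinite S2" unfolding infinite_nat_iff_unbounded by blast
  have "0 \<notin> S2" unfolding S2_def by simp
  then have "x \<in> setA G S2" using Aeq[OF inf2] x by simp
  then obtain t where "t \<in> S2" "x [^]\<^bsub>G\<^esub> t = \<one>\<^bsub>G\<^esub>" unfolding setA_def by blast
  then show False using group.pow_eq_id[OF grp x(1)] unfolding S2_def od_def by blast
qed


theorem mainTheorem13:
  fixes G :: "('a, 'b) monoid_scheme" and T :: "'a topology"
  assumes "Polish_group G T"
    and "carrier G \<noteq> {\<one>\<^bsub>G\<^esub>}"
    and "\<And>S. infinite S \<Longrightarrow> 0 \<notin> S \<Longrightarrow> T closure_of (setA G S) = topspace T"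
  shows "(\<forall>f\<in>carrier G. meagre_in T (top_similarity_class G T f)) \<and>
         (\<forall>S. infinite S \<and> 0 \<notin> S \<longrightarrow>
              T closure_of (setC G T S) = topspace T \<and>
              gdelta_in T (setC G T S) \<and>
              (\<forall>f g. f \<in> setC G T S \<and> g \<in> carrier G \<and> top_similar G T f g \<longrightarrow> g \<in> setC G T S))"
proof -
  note PG = assms(1)
  have part2: "\<forall>S. infinite S \<and> 0 \<notin> S \<longrightarrow>
              T closure_of (setC G T S) = topspace T \<and>
              gdelta_in T (setC G T S) \<and>
              (\<forall>f g. f \<in> setC G T S \<and> g \<in> carrier G \<and> top_similar G T f g \<longrightarrow> g \<in> setC G T S)"
  proof (intro allI impI)
    fix S :: "nat set" assume S: "infinite S \<and> 0 \<notin> S"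
    note P = setC_props[OF PG assms(3)[of S]]
    show "T closure_of (setC G T S) = topspace T \<and>
              gdelta_in T (setC G T S) \<and>
              (\<forall>f g. f \<in> setC G T S \<and> g \<in> carrier G \<and> top_similar G T f g \<longrightarrow> g \<in> setC G T S)"
      using P S setC_invariant[OF PG] by blast
  qed
  have part1: "\<forall>f\<in>carrier G. meagre_in T (top_similarity_class G T f)"
  proof
  note PG = assms(1)
    have grp: "group G" by (rule PG_group[OF PG])
    have mon: "monoid G" using grp by (rule group.is_monoid)
    have top: "topspace T = carrier G" by (rule PG_top[OF PG])
    have one: "\<one>\<^bsub>G\<^esub> \<in> carrier G" by (rule monoid.one_closed[OF mon])
    fix f assume fc: "f \<in> carrier G"
    define K where "K = top_similarity_class G T f"
    have Ksub: "K \<subseteq> topspace T" unfolding K_def top_similarity_class_def top by blast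
    show "meagre_in T (top_similarity_class G T f)"
      unfolding K_def[symmetric]
    proof (rule ccontr)
      assume nm: "\<not> meagre_in T K"
      have allC: "f \<in> setC G T S" if S: "infinite S" "0 \<notin> S" for S :: "nat set"
      proof (rule ccontr)
        assume nf: "f \<notin> setC G T S"
        have "K \<subseteq> topspace T - setC G T S"
        proof
          fix g assume g: "g \<in> K"
          then have gc: "g \<in> carrier G" and sim: "top_similar G T f g"
            unfolding K_def top_similarity_class_def by auto
          have "g \<notin> setC G T S"
          proof
            assume "g \<in> setC G T S"
            then have "f \<in> setC G T S"
              using setC_invariant[OF PG _ fc top_similar_sym[OF PG fc gc sim]] by blast
            then show False using nf by blast
          qed
          then show "g \<in> topspace T - setC G T S" using gc top by blast
        qed
        moreover have "meagre_in T (topspace T - setC G T S)"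
          using setC_props(3)[OF PG assms(3)[OF S]] .
        ultimately have "meagre_in T K" using Ksub unfolding meagre_in_def by blast
        then show False using nm by blast
      qed
      have f1: "f = \<one>\<^bsub>G\<^esub>" by (rule f_is_one[OF PG fc allC])
      have K1: "K \<subseteq> {\<one>\<^bsub>G\<^esub>}"
        unfolding K_def top_similarity_class_def f1 using class_one[OF PG] by blast
      have cl: "T closure_of {\<one>\<^bsub>G\<^esub>} = {\<one>\<^bsub>G\<^esub>}"
        using Hausdorff_imp_t1_space[OF PG_Hausdorff[OF PG]] one top
        by (simp add: closure_of_closedin t1_space_closedin_singleton)
      have "T interior_of {\<one>\<^bsub>G\<^esub>} = {}"
      proof (rule ccontr)
        assume "T interior_of {\<one>\<^bsub>G\<^esub>} \<noteq> {}"
        then have "T interior_of {\<one>\<^bsub>G\<^esub>} = {\<one>\<^bsub>G\<^esub>}" using interior_of_subset[of T "{\<one>\<^bsub>G\<^esub>}"] by blast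
        then have "openin T {\<one>\<^bsub>G\<^esub>}" by (metis openin_interior_of)
        then show False using one_not_open[OF PG assms(2,3)] by blast
      qed
      then have "nowhere_dense_in T {\<one>\<^bsub>G\<^esub>}" unfolding nowhere_dense_in_def cl using one top by simp
      then have "meagre_in T K" unfolding meagre_in_def using K1 Ksub
        by (intro conjI exI[of _ "\<lambda>n. {\<one>\<^bsub>G\<^esub>}"]) auto
      then show False using nm by blast
    qed
  qed
  show ?thesis using part1 part2 by blast
qed

end
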